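(* Let $T$ be a rank-one transformation with cut sequence $(r_n)$ and spacer sequence $(s_{n,i})$, and suppose there is a constant $c\ge0$ such that for all sufficiently large $n$, $s_{n,i}=c$ for all $0\le i<r_n$ and $s_{n,r_n}=0$. Then $T$ is an odometer.
   Context: Rank-one transformations: given a cut sequence $(r_n)_{n\ge1}$ of positive integers and a spacer sequence $(s_{n,i})_{n\ge1,0\le i\le r_n}$ of nonnegative integers, the rank-one transformation is built by cutting and stacking: $C_1=[0,1)$ is a column of height $1$; $C_{n+1}$ is obtained by cutting $C_n$ (levels $I_{n,0},\dots,I_{n,h_n-1}$, with $T$ mapping each level affinely onto the next) into $r_n+1$ equal-width subcolumns, adding $s_{n,i}$ spacer intervals atop subcolumn $i$ ($i=0$ leftmost), and stacking each subcolumn on top of the previous one; $T$ is the limit map. $T$ is an odometer if the same transformation (up to measure-theoretic isomorphism) can be obtained by a cutting-and-stacking construction (possibly starting from a different initial column) whose spacers satisfy, for some $N$, $s_{n,i}=0$ for all $n\ge N$ and $0\le i<r_n$. *)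

theory Defs
  imports "HOL-Analysis.Analysis"
begin

text \<open>A column is represented as a triple (as, w, L): the list of left endpoints of
  its levels (bottom to top), the common width w of the levels (level j is the
  interval [as!j, as!j + w)), and the total length L of [0, L) already used
  (new spacer intervals are placed to the right of L).\<close>

type_synonym column = "real list \<times> real \<times> real"

definition cs_init :: "nat \<Rightarrow> real \<Rightarrow> column" where
  "cs_init h0 w0 = (map (\<lambda>j. real j * w0) [0..<h0], w0, real h0 * w0)"

text \<open>One cutting-and-stacking step with cut number rr and spacer numbers ss i
  (i = 0..rr): cut into rr+1 subcolumns of width w/(rr+1) (subcolumn 0 leftmost),
  put ss i new spacer intervals on top of subcolumn i, and stack subcolumn i+1
  on top of subcolumn i.\<close>
definition cs_step :: "nat \<Rightarrow> (nat \<Rightarrow> nat) \<Rightarrow> column \<Rightarrow> column" where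
  "cs_step rr ss C = (case C of (as, w, L) \<Rightarrow>
     let w' = w / real (rr + 1) in
     (concat (map (\<lambda>i. map (\<lambda>a. a + real i * w') as @
                        map (\<lambda>k. L + real ((\<Sum>i'<i. ss i') + k) * w') [0..<ss i])
                  [0..<Suc rr]),
      w', L + real (\<Sum>i\<le>rr. ss i) * w'))"

text \<open>cs_col h0 w0 r s m is the column C_(m+1); C_1 is the initial column and
  C_(n+1) is obtained from C_n using r n and s n.\<close>
fun cs_col :: "nat \<Rightarrow> real \<Rightarrow> (nat \<Rightarrow> nat) \<Rightarrow> (nat \<Rightarrow> nat \<Rightarrow> nat) \<Rightarrow> nat \<Rightarrow> column" where
  "cs_col h0 w0 r s 0 = cs_init h0 w0"
| "cs_col h0 w0 r s (Suc m) = cs_step (r (Suc m)) (s (Suc m)) (cs_col h0 w0 r s m)"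

definition cs_lefts :: "nat \<Rightarrow> real \<Rightarrow> (nat \<Rightarrow> nat) \<Rightarrow> (nat \<Rightarrow> nat \<Rightarrow> nat) \<Rightarrow> nat \<Rightarrow> real list" where
  "cs_lefts h0 w0 r s m = fst (cs_col h0 w0 r s m)"

definition cs_width :: "nat \<Rightarrow> real \<Rightarrow> (nat \<Rightarrow> nat) \<Rightarrow> (nat \<Rightarrow> nat \<Rightarrow> nat) \<Rightarrow> nat \<Rightarrow> real" where
  "cs_width h0 w0 r s m = fst (snd (cs_col h0 w0 r s m))"

definition cs_level :: "nat \<Rightarrow> real \<Rightarrow> (nat \<Rightarrow> nat) \<Rightarrow> (nat \<Rightarrow> nat \<Rightarrow> nat) \<Rightarrow> nat \<Rightarrow> nat \<Rightarrow> real set" where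
  "cs_level h0 w0 r s m j =
     {cs_lefts h0 w0 r s m ! j ..< cs_lefts h0 w0 r s m ! j + cs_width h0 w0 r s m}"

definition cs_space :: "nat \<Rightarrow> real \<Rightarrow> (nat \<Rightarrow> nat) \<Rightarrow> (nat \<Rightarrow> nat \<Rightarrow> nat) \<Rightarrow> real set" where
  "cs_space h0 w0 r s = (\<Union>m. \<Union>j<length (cs_lefts h0 w0 r s m). cs_level h0 w0 r s m j)"

definition cs_measure :: "nat \<Rightarrow> real \<Rightarrow> (nat \<Rightarrow> nat) \<Rightarrow> (nat \<Rightarrow> nat \<Rightarrow> nat) \<Rightarrow> real measure" where
  "cs_measure h0 w0 r s = restrict_space lborel (cs_space h0 w0 r s)"

text \<open>The limit map: on a non-top level j of some column it is the translation
  mapping level j onto level j+1 (independent of the column chosen); elsewhere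
  (a null set) it is set to the identity.\<close>
definition cs_map :: "nat \<Rightarrow> real \<Rightarrow> (nat \<Rightarrow> nat) \<Rightarrow> (nat \<Rightarrow> nat \<Rightarrow> nat) \<Rightarrow> real \<Rightarrow> real" where
  "cs_map h0 w0 r s x =
     (if \<exists>m j. Suc j < length (cs_lefts h0 w0 r s m) \<and> x \<in> cs_level h0 w0 r s m j then
        (let m = (LEAST m. \<exists>j. Suc j < length (cs_lefts h0 w0 r s m) \<and> x \<in> cs_level h0 w0 r s m j);
             j = (THE j. Suc j < length (cs_lefts h0 w0 r s m) \<and> x \<in> cs_level h0 w0 r s m j)
         in x - cs_lefts h0 w0 r s m ! j + cs_lefts h0 w0 r s m ! Suc j)
      else x)"

text \<open>The rank-one transformation with cut sequence r and spacer sequence s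
  (indices n \<ge> 1, 0 \<le> i \<le> r n), starting from C_1 = [0,1).\<close>
definition rank_one_measure :: "(nat \<Rightarrow> nat) \<Rightarrow> (nat \<Rightarrow> nat \<Rightarrow> nat) \<Rightarrow> real measure" where
  "rank_one_measure r s = cs_measure 1 1 r s"

definition rank_one_map :: "(nat \<Rightarrow> nat) \<Rightarrow> (nat \<Rightarrow> nat \<Rightarrow> nat) \<Rightarrow> real \<Rightarrow> real" where
  "rank_one_map r s = cs_map 1 1 r s"

text \<open>Measure-theoretic isomorphism (in the sense of Walters): invariant conull
  sets and a bimeasurable, measure-preserving bijection between them conjugating
  the maps.\<close>
definition mp_isomorphic :: "'a measure \<Rightarrow> ('a \<Rightarrow> 'a) \<Rightarrow> 'b measure \<Rightarrow> ('b \<Rightarrow> 'b) \<Rightarrow> bool" where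
  "mp_isomorphic M T N S \<longleftrightarrow>
     (\<exists>X0 Y0 \<phi>. X0 \<in> sets M \<and> Y0 \<in> sets N \<and>
        emeasure M (space M - X0) = 0 \<and> emeasure N (space N - Y0) = 0 \<and>
        T ` X0 \<subseteq> X0 \<and> S ` Y0 \<subseteq> Y0 \<and>
        bij_betw \<phi> X0 Y0 \<and>
        \<phi> \<in> measurable (restrict_space M X0) (restrict_space N Y0) \<and>
        the_inv_into X0 \<phi> \<in> measurable (restrict_space N Y0) (restrict_space M X0) \<and>
        (\<forall>A \<in> sets N. A \<subseteq> Y0 \<longrightarrow> emeasure M (\<phi> -` A \<inter> X0) = emeasure N A) \<and>
        (\<forall>x \<in> X0. \<phi> (T x) = S (\<phi> x)))"

text \<open>Odometer: isomorphic to a cutting-and-stacking transformation (from an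
  arbitrary initial column of height h0 \<ge> 1 and width w0 > 0) whose spacers
  s' n i vanish for all n \<ge> N and i < r' n.\<close>
definition is_odometer :: "'a measure \<Rightarrow> ('a \<Rightarrow> 'a) \<Rightarrow> bool" where
  "is_odometer M T \<longleftrightarrow>
     (\<exists>h0 w0 r' s' N. h0 \<ge> 1 \<and> w0 > 0 \<and> (\<forall>n\<ge>1. r' n \<ge> 1) \<and>
        (\<forall>n\<ge>N. \<forall>i<r' n. s' n i = 0) \<and>
        mp_isomorphic M T (cs_measure h0 w0 r' s') (cs_map h0 w0 r' s'))"

end

theory Submission
  imports Defs
begin


lemma trans_sets:
  fixes B :: "real set" assumes B: "B \<in> sets borel"
  shows "(\<lambda>x. x + t) ` B \<in> sets borel"
proof -
  have e: "(\<lambda>x. x + t) ` B = (\<lambda>x. x - t) -` B \<inter> space borel"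
    by (auto simp: image_iff) (metis diff_add_cancel)
  have "(\<lambda>x::real. x - t) \<in> borel_measurable borel" by simp
  then show ?thesis unfolding e using B by (rule measurable_sets)
qed

lemma trans_emeasure:
  fixes B :: "real set" assumes B: "B \<in> sets borel"
  shows "emeasure lborel ((\<lambda>x. x + t) ` B) = emeasure lborel B"
proof -
  have m: "((+) t) \<in> measurable lborel borel" by simp
  have "emeasure lborel ((\<lambda>x. x + t) ` B) = emeasure (distr lborel borel ((+) t)) ((\<lambda>x. x + t) ` B)"
    by (simp only: lborel_distr_plus)
  also have "\<dots> = emeasure lborel ((+) t -` ((\<lambda>x. x + t) ` B) \<inter> space lborel)"
    by (rule emeasure_distr[OF m trans_sets[OF B]])
  also have "(+) t -` ((\<lambda>x. x + t) ` B) \<inter> space lborel = B"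
    by (auto simp: add.commute)
  finally show ?thesis .
qed

lemma piecewise_translation:
  fixes Q :: "'i::countable \<Rightarrow> real set" and f :: "real \<Rightarrow> real"
  assumes Qs: "\<And>i. Q i \<in> sets borel" and disj: "disjoint_family Q"
    and fQ: "\<And>i x. x \<in> Q i \<Longrightarrow> f x = x + dd i"
    and inj: "inj_on f (\<Union>i. Q i)"
    and A: "A \<in> sets borel"
  shows "emeasure lborel (f -` A \<inter> (\<Union>i. Q i)) = emeasure lborel (A \<inter> f ` (\<Union>i. Q i))"
    and "f ` (\<Union>i. Q i) \<in> sets borel"
proof -
  define U where "U i = Q i \<inter> (\<lambda>x. x + dd i) -` A" for i
  define V where "V i = (\<lambda>x. x + dd i) ` U i" for i
  have Us: "U i \<in> sets borel" for i
  proof -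
    have "(\<lambda>x::real. x + dd i) \<in> borel_measurable borel" by simp
    then have "(\<lambda>x. x + dd i) -` A \<inter> space borel \<in> sets borel" using A by (rule measurable_sets)
    then show ?thesis unfolding U_def using Qs[of i] by (metis Int_commute inf_top.right_neutral space_borel sets.Int)
  qed
  have Vs: "V i \<in> sets borel" for i unfolding V_def using Us by (rule trans_sets)
  have e1: "f -` A \<inter> (\<Union>i. Q i) = (\<Union>i. U i)" unfolding U_def using fQ by auto
  have fimg: "f ` Q i = (\<lambda>x. x + dd i) ` Q i" for i using fQ by (auto simp: image_iff)
  have e2: "A \<inter> f ` (\<Union>i. Q i) = (\<Union>i. V i)" unfolding V_def U_def using fQ by (auto simp: image_iff) blast
  have dU: "disjoint_family U" using disj unfolding disjoint_family_on_def U_def by blast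
  have dV: "disjoint_family V"
    unfolding disjoint_family_on_def
  proof (intro ballI impI)
    fix i j :: 'i assume "i \<noteq> j"
    show "V i \<inter> V j = {}"
    proof (rule ccontr)
      assume "V i \<inter> V j \<noteq> {}"
      then obtain x y where x: "x \<in> U i" "y \<in> U j" "x + dd i = y + dd j" unfolding V_def by auto
      have "x \<in> Q i" "y \<in> Q j" using x unfolding U_def by auto
      moreover then have "f x = f y" using fQ x(3) by simp
      ultimately have "x = y" using inj by (auto dest: inj_onD)
      then show False using disj \<open>i \<noteq> j\<close> \<open>x \<in> Q i\<close> \<open>y \<in> Q j\<close> unfolding disjoint_family_on_def by auto
    qed
  qed
  have "emeasure lborel (\<Union>i. U i) = (\<integral>\<^sup>+ i. emeasure lborel (U i) \<partial>count_space UNIV)"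
    using emeasure_UN_countable[of UNIV U lborel] Us dU by simp
  also have "\<dots> = (\<integral>\<^sup>+ i. emeasure lborel (V i) \<partial>count_space UNIV)"
    unfolding V_def using trans_emeasure[OF Us] by simp
  also have "\<dots> = emeasure lborel (\<Union>i. V i)"
    using emeasure_UN_countable[of UNIV V lborel] Vs dV by simp
  finally show "emeasure lborel (f -` A \<inter> (\<Union>i. Q i)) = emeasure lborel (A \<inter> f ` (\<Union>i. Q i))"
    unfolding e1 e2 .
  have "f ` (\<Union>i. Q i) = (\<Union>i. f ` Q i)" by (rule image_UN)
  also have "\<dots> = (\<Union>i. (\<lambda>x. x + dd i) ` Q i)" using fimg by simp
  also have "\<dots> \<in> sets borel" using trans_sets[OF Qs] by auto
  finally show "f ` (\<Union>i. Q i) \<in> sets borel" .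
qed

lemma piecewise_meas:
  fixes Q :: "'i::countable \<Rightarrow> real set" and f :: "real \<Rightarrow> real"
  assumes Qs: "\<And>i. Q i \<in> sets borel" and sub: "\<And>i. Q i \<subseteq> \<Omega>" and cov: "\<Omega> \<subseteq> (\<Union>i. Q i)"
    and fQ: "\<And>i x. x \<in> Q i \<Longrightarrow> f x = x + dd i"
  shows "f \<in> borel_measurable (restrict_space lborel \<Omega>)"
proof (rule measurable_piecewise_restrict[of "range Q"])
  show "countable (range Q)" by simp
  show "X \<inter> space (restrict_space lborel \<Omega>) \<in> sets (restrict_space lborel \<Omega>)" if "X \<in> range Q" for X
  proof -
    obtain i where X: "X = Q i" using \<open>X \<in> range Q\<close> by auto
    have "Q i = \<Omega> \<inter> Q i" using sub by auto
    then have "Q i \<in> sets (restrict_space lborel \<Omega>)" using Qs[of i] unfolding sets_restrict_space by auto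
    then show ?thesis using sub X by (simp add: Int_absorb2)
  qed
  show "space (restrict_space lborel \<Omega>) \<subseteq> \<Union> (range Q)" using cov by (simp add: space_restrict_space)
  show "f \<in> borel_measurable (restrict_space (restrict_space lborel \<Omega>) X)" if "X \<in> range Q" for X
  proof -
    obtain i where X: "X = Q i" using \<open>X \<in> range Q\<close> by auto
    have "(\<lambda>x. x + dd i) \<in> borel_measurable (restrict_space (restrict_space lborel \<Omega>) X)"
      by (intro measurable_restrict_space1) simp
    then show ?thesis
      by (rule measurable_cong[THEN iffD1, rotated]) (use fQ X in \<open>auto simp: space_restrict_space\<close>)
  qed
qed



fun wd :: "real \<Rightarrow> (nat \<Rightarrow> nat) \<Rightarrow> nat \<Rightarrow> real" where
  "wd w0 r 0 = w0"
| "wd w0 r (Suc m) = wd w0 r m / real (r (Suc m) + 1)"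

definition blk :: "nat list \<Rightarrow> nat \<Rightarrow> (nat \<Rightarrow> nat) \<Rightarrow> nat \<Rightarrow> nat list" where
  "blk ks rr ss i = map (\<lambda>k. k * (rr + 1) + i) ks @
      map (\<lambda>t. length ks * (rr + 1) + (\<Sum>i'<i. ss i') + t) [0..<ss i]"

fun ksl :: "nat \<Rightarrow> (nat \<Rightarrow> nat) \<Rightarrow> (nat \<Rightarrow> nat \<Rightarrow> nat) \<Rightarrow> nat \<Rightarrow> nat list" where
  "ksl h0 r s 0 = [0..<h0]"
| "ksl h0 r s (Suc m) = concat (map (blk (ksl h0 r s m) (r (Suc m)) (s (Suc m))) [0..<Suc (r (Suc m))])"

lemma len_concat_upt: "length (concat (map f [0..<n])) = (\<Sum>i<n. length (f i))"
  by (induction n) auto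

lemma nth_concat_upt:
  "i < n \<Longrightarrow> p < length (f i) \<Longrightarrow>
   concat (map f [0..<n]) ! ((\<Sum>i'<i. length (f i')) + p) = f i ! p"
proof (induction n)
  case 0 thus ?case by simp
next
  case (Suc n)
  show ?case
  proof (cases "i < n")
    case True
    have "(\<Sum>i'<i. length (f i')) + p < (\<Sum>i'<Suc i. length (f i'))" using Suc.prems by simp
    also have "\<dots> \<le> (\<Sum>i'<n. length (f i'))" by (rule sum_mono2) (use True in auto)
    finally show ?thesis using Suc.IH[OF True Suc.prems(2)] by (simp add: nth_append len_concat_upt)
  next
    case False then have "i = n" using Suc.prems by simp
    then show ?thesis using Suc.prems by (simp add: nth_append len_concat_upt)
  qed
qed

lemma length_blk[simp]: "length (blk ks rr ss i) = length ks + ss i"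
  by (simp add: blk_def)

lemma length_ksl_Suc:
  "length (ksl h0 r s (Suc m)) = (r (Suc m) + 1) * length (ksl h0 r s m) + (\<Sum>i\<le>r (Suc m). s (Suc m) i)"
proof -
  have "\<And>f (n::nat). sum f {..<n} + f n = sum f {..n}"
    by (metis add.commute lessThan_Suc_atMost sum.lessThan_Suc)
  then show ?thesis by (simp add: len_concat_upt sum.distrib)
qed

lemma off_bound:
  assumes "i \<le> rr" "p < length ks"
  shows "(\<Sum>i'<i. length ks + ss i') + p < (\<Sum>i'<Suc rr. length ks + ss i')"
proof -
  have "(\<Sum>i'<i. length ks + ss i') + p < (\<Sum>i'<Suc i. length ks + ss i')" using assms by simp
  also have "\<dots> \<le> (\<Sum>i'<Suc rr. length ks + ss i')" by (rule sum_mono2) (use assms in auto)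
  finally show ?thesis .
qed

lemma nth_ksl_Suc:
  assumes "i \<le> r (Suc m)" "p < length (ksl h0 r s m)"
  shows "ksl h0 r s (Suc m) ! ((\<Sum>i'<i. length (ksl h0 r s m) + s (Suc m) i') + p)
           = ksl h0 r s m ! p * (r (Suc m) + 1) + i"
    and "(\<Sum>i'<i. length (ksl h0 r s m) + s (Suc m) i') + p < length (ksl h0 r s (Suc m))"
proof -
  let ?f = "blk (ksl h0 r s m) (r (Suc m)) (s (Suc m))"
  have "ksl h0 r s (Suc m) ! ((\<Sum>i'<i. length (?f i')) + p) = ?f i ! p"
    unfolding ksl.simps by (rule nth_concat_upt) (use assms in auto)
  then show "ksl h0 r s (Suc m) ! ((\<Sum>i'<i. length (ksl h0 r s m) + s (Suc m) i') + p)
           = ksl h0 r s m ! p * (r (Suc m) + 1) + i"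
    using assms by (simp add: blk_def nth_append)
  show "(\<Sum>i'<i. length (ksl h0 r s m) + s (Suc m) i') + p < length (ksl h0 r s (Suc m))"
    using off_bound[OF assms, of "s (Suc m)"] by (simp add: len_concat_upt)
qed

lemma distinct_step:
  assumes set_ks: "set ks = {..<length ks}" and dks: "distinct ks" and n: "n \<le> Suc rr"
  shows "distinct (concat (map (blk ks rr ss) [0..<n])) \<and>
    set (concat (map (blk ks rr ss) [0..<n])) \<subseteq>
      {x. x < length ks * (rr+1) \<and> x mod (rr+1) < n} \<union>
      {x. length ks * (rr+1) \<le> x \<and> x < length ks * (rr+1) + (\<Sum>i<n. ss i)}"
  using n
proof (induction n)
  case 0 thus ?case by simp
next
  case (Suc n)
  let ?h = "length ks" and ?R = "rr + 1"
  have nR: "n < ?R" using Suc.prems by simp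
  have olds: "k * ?R + n < ?h * ?R \<and> (k * ?R + n) mod ?R = n" if "k \<in> set ks" for k
  proof -
    have "k < ?h" using that set_ks by auto
    then have "k * ?R + ?R \<le> ?h * ?R"
      by (metis add.commute mult_Suc mult_le_mono1 Suc_leI)
    moreover have "(k * ?R + n) mod ?R = n" using nR by (simp only: mod_mult_self3 mod_less)
    ultimately show ?thesis using nR by simp
  qed
  have sb: "set (blk ks rr ss n) \<subseteq>
      {x. x < ?h * ?R \<and> x mod ?R = n} \<union>
      {x. ?h * ?R + (\<Sum>i<n. ss i) \<le> x \<and> x < ?h * ?R + (\<Sum>i<Suc n. ss i)}"
    using olds by (auto simp: blk_def)
  have db: "distinct (blk ks rr ss n)"
  proof -
    have "inj_on (\<lambda>k. k * ?R + n) (set ks)"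
    proof (rule inj_onI)
      fix x y assume "x * ?R + n = y * ?R + n"
      then have "x * ?R = y * ?R" by (simp only: add_right_cancel)
      then show "x = y" by (metis mult_right_cancel add_is_0 one_neq_zero)
    qed
    then have "distinct (map (\<lambda>k. k * ?R + n) ks)" using dks by (simp add: distinct_map)
    moreover have "distinct (map (\<lambda>t. ?h * ?R + (\<Sum>i'<n. ss i') + t) [0..<ss n])"
      by (simp add: distinct_map inj_on_def)
    moreover have "set (map (\<lambda>k. k * ?R + n) ks) \<inter>
                   set (map (\<lambda>t. ?h * ?R + (\<Sum>i'<n. ss i') + t) [0..<ss n]) = {}"
      using olds by force
    ultimately show ?thesis by (simp add: blk_def)
  qed
  have IH: "distinct (concat (map (blk ks rr ss) [0..<n]))"
     "set (concat (map (blk ks rr ss) [0..<n])) \<subseteq>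
      {x. x < ?h * ?R \<and> x mod ?R < n} \<union> {x. ?h * ?R \<le> x \<and> x < ?h * ?R + (\<Sum>i<n. ss i)}"
    using Suc by auto
  have disj: "set (concat (map (blk ks rr ss) [0..<n])) \<inter> set (blk ks rr ss n) = {}"
    using IH(2) sb by fastforce
  have "distinct (concat (map (blk ks rr ss) [0..<Suc n]))"
    using IH(1) db disj by simp
  moreover have "set (concat (map (blk ks rr ss) [0..<Suc n])) \<subseteq>
      {x. x < ?h * ?R \<and> x mod ?R < Suc n} \<union> {x. ?h * ?R \<le> x \<and> x < ?h * ?R + (\<Sum>i<Suc n. ss i)}"
    using IH(2) sb by fastforce
  ultimately show ?case by blast
qed

lemma ksl_set_distinct:
  "set (ksl h0 r s m) = {..<length (ksl h0 r s m)} \<and> distinct (ksl h0 r s m)"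
proof (induction m)
  case 0 thus ?case by auto
next
  case (Suc m)
  let ?ks = "ksl h0 r s m" and ?rr = "r (Suc m)" and ?ss = "s (Suc m)"
  have D: "distinct (concat (map (blk ?ks ?rr ?ss) [0..<Suc ?rr])) \<and>
    set (concat (map (blk ?ks ?rr ?ss) [0..<Suc ?rr])) \<subseteq>
      {x. x < length ?ks * (?rr+1) \<and> x mod (?rr+1) < Suc ?rr} \<union>
      {x. length ?ks * (?rr+1) \<le> x \<and> x < length ?ks * (?rr+1) + (\<Sum>i<Suc ?rr. ?ss i)}"
    by (rule distinct_step) (use Suc in auto)
  have len: "length (ksl h0 r s (Suc m)) = length ?ks * (?rr+1) + (\<Sum>i<Suc ?rr. ?ss i)"
    by (simp add: len_concat_upt sum.distrib)
  have dist: "distinct (ksl h0 r s (Suc m))" using D by simp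
  have sub: "set (ksl h0 r s (Suc m)) \<subseteq> {..<length (ksl h0 r s (Suc m))}"
    using D unfolding len by auto
  have "card (set (ksl h0 r s (Suc m))) = length (ksl h0 r s (Suc m))"
    by (rule distinct_card[OF dist])
  then have "card (set (ksl h0 r s (Suc m))) = card {..<length (ksl h0 r s (Suc m))}"
    by (simp only: card_lessThan)
  then have "set (ksl h0 r s (Suc m)) = {..<length (ksl h0 r s (Suc m))}"
    using card_subset_eq[OF finite_lessThan sub] by simp
  with dist show ?case by simp
qed

lemma step_eq:
  "cs_step rr ss (as, w, L) =
    (concat (map (\<lambda>i. map (\<lambda>a. a + real i * (w / real (rr + 1))) as @
        map (\<lambda>k. L + real ((\<Sum>i'<i. ss i') + k) * (w / real (rr + 1))) [0..<ss i]) [0..<Suc rr]),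
     w / real (rr + 1), L + real (\<Sum>i\<le>rr. ss i) * (w / real (rr + 1)))"
  by (simp add: cs_step_def Let_def)

lemma col_eq:
  "cs_col h0 w0 r s m = (map (\<lambda>k. real k * wd w0 r m) (ksl h0 r s m), wd w0 r m,
                          real (length (ksl h0 r s m)) * wd w0 r m)"
proof (induction m)
  case 0 thus ?case by (simp add: cs_init_def)
next
  case (Suc m)
  let ?ks = "ksl h0 r s m" and ?rr = "r (Suc m)" and ?ss = "s (Suc m)" and ?w = "wd w0 r m"
  let ?w' = "?w / real (?rr + 1)"
  have R: "real (?rr + 1) \<noteq> 0" by simp
  have e1: "(\<lambda>i. map (\<lambda>a. a + real i * ?w') (map (\<lambda>k. real k * ?w) ?ks) @
            map (\<lambda>k. real (length ?ks) * ?w + real ((\<Sum>i'<i. ?ss i') + k) * ?w') [0..<?ss i])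
          = (\<lambda>i. map (\<lambda>k. real k * ?w') (blk ?ks ?rr ?ss i))"
    using R by (intro ext) (simp add: blk_def field_simps)
  have len: "real (length ?ks) * ?w + real (\<Sum>i\<le>?rr. ?ss i) * ?w' =
     real (length (ksl h0 r s (Suc m))) * ?w'"
    unfolding length_ksl_Suc using R by (simp add: field_simps)
  show ?case
    unfolding cs_col.simps Suc step_eq e1 len
    by (simp add: map_concat comp_def del: upt_Suc)
qed

declare ksl.simps(2)[simp del]

locale csc =
  fixes h0 :: nat and w0 :: real and r :: "nat \<Rightarrow> nat" and s :: "nat \<Rightarrow> nat \<Rightarrow> nat"
  assumes w0pos: "w0 > 0"
begin

abbreviation ks where "ks m \<equiv> ksl h0 r s m"
abbreviation w where "w m \<equiv> wd w0 r m"
abbreviation h where "h m \<equiv> length (ks m)"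
abbreviation L where "L m \<equiv> real (h m) * w m"

definition lev :: "nat \<Rightarrow> nat \<Rightarrow> real set" where
  "lev m j = {real (ks m ! j) * w m ..< real (ks m ! j) * w m + w m}"

definition off :: "nat \<Rightarrow> nat \<Rightarrow> nat" where
  "off m i = (\<Sum>i'<i. h m + s (Suc m) i')"

definition dif :: "nat \<Rightarrow> nat \<Rightarrow> real" where
  "dif m j = (real (ks m ! Suc j) - real (ks m ! j)) * w m"

lemma w_pos: "w m > 0"
  by (induction m) (auto simp: w0pos)

lemma lefts_eq: "cs_lefts h0 w0 r s m = map (\<lambda>k. real k * w m) (ks m)"
  by (simp add: cs_lefts_def col_eq)

lemma width_eq: "cs_width h0 w0 r s m = w m"
  by (simp add: cs_width_def col_eq)

lemma level_eq: "j < h m \<Longrightarrow> cs_level h0 w0 r s m j = lev m j"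
  by (simp add: cs_level_def lefts_eq width_eq lev_def)

lemma lev_unique:
  assumes "j < h m" "j' < h m" "x \<in> lev m j" "x \<in> lev m j'"
  shows "j = j'"
proof -
  have wp: "w m > 0" by (rule w_pos)
  have "ks m ! j = ks m ! j'"
  proof (rule ccontr)
    assume ne: "ks m ! j \<noteq> ks m ! j'"
    { fix a b :: nat assume ab: "a < b" "x \<in> {real a * w m..<real a * w m + w m}" "x \<in> {real b * w m..<real b * w m + w m}"
      then have "real a + 1 \<le> real b" by simp
      then have "(real a + 1) * w m \<le> real b * w m" using wp by (intro mult_right_mono) auto
      with ab have False by (auto simp: algebra_simps) }
    with ne assms(3,4) show False unfolding lev_def by (metis linorder_neqE_nat)
  qed
  then show ?thesis using ksl_set_distinct[of h0 r s m] assms(1,2) nth_eq_iff_index_eq by blast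
qed

lemma col_eq_interval: "(\<Union>j<h m. lev m j) = {0..<L m}"
proof
  have wp: "w m > 0" by (rule w_pos)
  show "(\<Union>j<h m. lev m j) \<subseteq> {0..<L m}"
  proof
    fix x assume "x \<in> (\<Union>j<h m. lev m j)"
    then obtain j where j: "j < h m" "x \<in> lev m j" by auto
    have "ks m ! j \<in> set (ks m)" using j by simp
    then have "ks m ! j < h m" using ksl_set_distinct[of h0 r s m] by auto
    then have "real (ks m ! j) + 1 \<le> real (h m)" by linarith
    then have "(real (ks m ! j) + 1) * w m \<le> real (h m) * w m" using wp by (intro mult_right_mono) auto
    then have a: "real (ks m ! j) * w m + w m \<le> L m" by (simp add: algebra_simps)
    have b: "0 \<le> real (ks m ! j) * w m" using wp by simp
    have c: "real (ks m ! j) * w m \<le> x" "x < real (ks m ! j) * w m + w m" using j by (auto simp: lev_def)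
    from a b c have "0 \<le> x" "x < L m" by linarith+
    then show "x \<in> {0..<L m}" by simp
  qed
  show "{0..<L m} \<subseteq> (\<Union>j<h m. lev m j)"
  proof
    fix x assume x: "x \<in> {0..<L m}"
    define k where "k = nat \<lfloor>x / w m\<rfloor>"
    have x0: "0 \<le> x / w m" using x wp by auto
    have "x / w m < real (h m)" using x wp by (simp add: divide_less_eq)
    then have kh: "k < h m" unfolding k_def using x0 by (simp add: nat_less_iff floor_less_iff)
    have k1: "real k \<le> x / w m" "x / w m < real k + 1" unfolding k_def using x0 by linarith+
    then have "real k * w m \<le> x" "x < real k * w m + w m" using wp by (auto simp: field_simps)
    moreover have "k \<in> set (ks m)" using kh ksl_set_distinct[of h0 r s m] by auto
    then obtain j where "j < h m" "ks m ! j = k" by (auto simp: in_set_conv_nth)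
    ultimately show "x \<in> (\<Union>j<h m. lev m j)" by (auto simp: lev_def)
  qed
qed

lemma L_mono_Suc: "L m \<le> L (Suc m)"
proof -
  have R: "real (r (Suc m) + 1) > 0" by simp
  have "L (Suc m) = real ((r (Suc m) + 1) * h m + (\<Sum>i\<le>r (Suc m). s (Suc m) i)) * (w m / real (r (Suc m) + 1))"
    by (simp only: length_ksl_Suc wd.simps)
  also have "\<dots> = L m + real (\<Sum>i\<le>r (Suc m). s (Suc m) i) * (w m / real (r (Suc m) + 1))"
    using R by (simp add: field_simps)
  finally have eq: "L (Suc m) = L m + real (\<Sum>i\<le>r (Suc m). s (Suc m) i) * (w m / real (r (Suc m) + 1))" .
  have "0 \<le> real (\<Sum>i\<le>r (Suc m). s (Suc m) i) * (w m / real (r (Suc m) + 1))"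
    using w_pos[of m] R by (intro mult_nonneg_nonneg) (auto simp: sum_nonneg)
  with eq show ?thesis by linarith
qed

lemma L_mono: "m \<le> m' \<Longrightarrow> L m \<le> L m'"
  by (induction m' rule: dec_induct) (metis L_mono_Suc order_trans order_refl)+

lemma refine:
  assumes j: "j < h m" and x: "x \<in> lev m j"
  shows "\<exists>i. i \<le> r (Suc m) \<and> x \<in> lev (Suc m) (off m i + j) \<and>
           (\<forall>p<h m. off m i + p < h (Suc m) \<and> ks (Suc m) ! (off m i + p) = ks m ! p * (r (Suc m) + 1) + i)"
proof -
  let ?R = "r (Suc m) + 1" and ?k = "ks m ! j"
  have wp: "w m > 0" by (rule w_pos)
  have R: "real ?R > 0" by simp
  define w' where "w' = w m / real ?R"
  have w'p: "w' > 0" using wp R by (simp add: w'_def)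
  define i where "i = nat \<lfloor>(x - real ?k * w m) / w'\<rfloor>"
  have x1: "real ?k * w m \<le> x" "x < real ?k * w m + w m" using x by (auto simp: lev_def)
  have y0: "0 \<le> (x - real ?k * w m) / w'" using x1 w'p by auto
  have "real ?R * w' = w m" using R by (simp add: w'_def)
  then have "x - real ?k * w m < real ?R * w'" using x1 by simp
  then have "(x - real ?k * w m) / w' < real ?R" using w'p by (simp add: pos_divide_less_eq)
  then have iR: "i < ?R" unfolding i_def using y0 by (simp add: nat_less_iff floor_less_iff)
  have i1: "real i \<le> (x - real ?k * w m) / w'" "(x - real ?k * w m) / w' < real i + 1"
    unfolding i_def using y0 by linarith+
  then have i2: "real i * w' \<le> x - real ?k * w m" "x - real ?k * w m < real i * w' + w'"
    using w'p by (auto simp: field_simps)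
  have nth: "\<forall>p<h m. off m i + p < h (Suc m) \<and> ks (Suc m) ! (off m i + p) = ks m ! p * ?R + i"
    using nth_ksl_Suc[of i r m _ h0 s] iR unfolding off_def by auto
  have wS: "w (Suc m) = w'" by (simp add: w'_def)
  have "real (ks m ! j * ?R + i) * w' = real ?k * w m + real i * w'"
    using R by (simp add: w'_def field_simps)
  then have "x \<in> lev (Suc m) (off m i + j)"
    using nth j i2 unfolding lev_def wS by auto
  moreover have "i \<le> r (Suc m)" using iR by simp
  ultimately show ?thesis using nth by blast
qed

lemma refine_dif:
  assumes j: "Suc j < h m" and x: "x \<in> lev m j"
  shows "\<exists>q. Suc q < h (Suc m) \<and> x \<in> lev (Suc m) q \<and> dif (Suc m) q = dif m j"
proof -
  obtain i where i: "i \<le> r (Suc m)" "x \<in> lev (Suc m) (off m i + j)"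
    and nth: "\<forall>p<h m. off m i + p < h (Suc m) \<and> ks (Suc m) ! (off m i + p) = ks m ! p * (r (Suc m) + 1) + i"
    using refine[of j m x] j x by auto
  let ?R = "r (Suc m) + 1"
  have R: "real ?R > 0" by simp
  have e1: "ks (Suc m) ! (off m i + j) = ks m ! j * ?R + i" using nth j by auto
  have e2: "ks (Suc m) ! Suc (off m i + j) = ks m ! Suc j * ?R + i" using nth j by (metis add_Suc_right)
  have b: "Suc (off m i + j) < h (Suc m)" using nth j by (metis add_Suc_right)
  have "dif (Suc m) (off m i + j) = dif m j"
    unfolding dif_def e1 e2 using R by (simp add: field_simps)
  then show ?thesis using b i by blast
qed

lemma refine_col:
  assumes j: "j < h m" and x: "x \<in> lev m j"
  shows "\<exists>q. q < h (Suc m) \<and> x \<in> lev (Suc m) q"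
  using refine[OF j x] j by blast

lemma propagate:
  assumes "Suc j < h m" "x \<in> lev m j" "m \<le> m'"
  shows "\<exists>j'. Suc j' < h m' \<and> x \<in> lev m' j' \<and> dif m' j' = dif m j"
  using assms(3)
proof (induction m' rule: dec_induct)
  case base thus ?case using assms by blast
next
  case (step n)
  then obtain j' where "Suc j' < h n" "x \<in> lev n j'" "dif n j' = dif m j" by blast
  then show ?case using refine_dif by metis
qed

lemma cs_map_eq:
  assumes j: "Suc j < h m" and x: "x \<in> lev m j"
  shows "cs_map h0 w0 r s x = x + dif m j"
proof -
  let ?P = "\<lambda>m. \<exists>j. Suc j < length (cs_lefts h0 w0 r s m) \<and> x \<in> cs_level h0 w0 r s m j"
  have lenl: "length (cs_lefts h0 w0 r s m') = h m'" for m' by (simp add: lefts_eq)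
  have Pm: "?P m" using j x level_eq[of j m] by (auto simp: lenl)
  define m0 where "m0 = (LEAST m. ?P m)"
  have P0: "?P m0" unfolding m0_def using Pm by (rule LeastI)
  have m0m: "m0 \<le> m" unfolding m0_def using Pm by (rule Least_le)
  obtain j0 where j0: "Suc j0 < h m0" "x \<in> lev m0 j0"
    using P0 level_eq by (auto simp: lenl)
  have the: "(THE j. Suc j < length (cs_lefts h0 w0 r s m0) \<and> x \<in> cs_level h0 w0 r s m0 j) = j0"
  proof (rule the_equality)
    show "Suc j0 < length (cs_lefts h0 w0 r s m0) \<and> x \<in> cs_level h0 w0 r s m0 j0"
      using j0 level_eq[of j0 m0] by (simp add: lenl)
  next
    fix j' assume "Suc j' < length (cs_lefts h0 w0 r s m0) \<and> x \<in> cs_level h0 w0 r s m0 j'"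
    then have "Suc j' < h m0" "x \<in> lev m0 j'" using level_eq[of j' m0] by (auto simp: lenl)
    then show "j' = j0" using lev_unique[of j' m0 j0 x] j0 by simp
  qed
  obtain j' where j': "Suc j' < h m" "x \<in> lev m j'" "dif m j' = dif m0 j0"
    using propagate[OF j0 m0m] by blast
  have "j' = j" using lev_unique[of j' m j x] j' j x by simp
  then have d: "dif m j = dif m0 j0" using j' by simp
  have "cs_map h0 w0 r s x = x - cs_lefts h0 w0 r s m0 ! j0 + cs_lefts h0 w0 r s m0 ! Suc j0"
  proof -
    have ex: "\<exists>m j. Suc j < length (cs_lefts h0 w0 r s m) \<and> x \<in> cs_level h0 w0 r s m j" using Pm by blast
    show ?thesis unfolding cs_map_def if_P[OF ex] Let_def m0_def[symmetric] the ..
  qed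
  also have "\<dots> = x + dif m0 j0"
    using j0 by (simp add: lefts_eq dif_def algebra_simps)
  finally show ?thesis using d by simp
qed

lemma space_eq: "cs_space h0 w0 r s = (\<Union>m. {0..<L m})"
proof -
  have "(\<Union>j<length (cs_lefts h0 w0 r s m). cs_level h0 w0 r s m j) = {0..<L m}" for m
    using col_eq_interval[of m] level_eq[of _ m] by (simp add: lefts_eq)
  then show ?thesis unfolding cs_space_def by simp
qed

lemma lev_next: "x \<in> lev m j \<Longrightarrow> x + dif m j \<in> lev m (Suc j)"
  by (auto simp: lev_def dif_def algebra_simps)

lemma w_le: assumes "\<forall>n\<ge>1. r n \<ge> 1" shows "w m \<le> w0 * (1/2)^m"
proof (induction m)
  case 0 thus ?case by simp
next
  case (Suc m)
  have "real (r (Suc m) + 1) \<ge> 2" using assms by auto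
  then have "w m / real (r (Suc m) + 1) \<le> w m / 2" using w_pos[of m] by (intro divide_left_mono) auto
  then have "w (Suc m) \<le> w m / 2" by simp
  then show ?case using Suc by simp
qed

lemma lev_sub: "j < h m \<Longrightarrow> lev m j \<subseteq> cs_space h0 w0 r s"
  using col_eq_interval[of m] unfolding space_eq by blast

lemma map_cases:
  "cs_map h0 w0 r s x = x \<or> (\<exists>m j. Suc j < h m \<and> x \<in> lev m j \<and> cs_map h0 w0 r s x = x + dif m j)"
proof (cases "\<exists>m j. Suc j < length (cs_lefts h0 w0 r s m) \<and> x \<in> cs_level h0 w0 r s m j")
  case True
  then obtain m j where "Suc j < h m" "x \<in> lev m j" using level_eq by (auto simp: lefts_eq)
  then show ?thesis using cs_map_eq by blast
next
  case False
  then show ?thesis unfolding cs_map_def if_not_P[OF False] by simp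
qed

lemma map_space: "x \<in> cs_space h0 w0 r s \<Longrightarrow> cs_map h0 w0 r s x \<in> cs_space h0 w0 r s"
proof -
  assume x: "x \<in> cs_space h0 w0 r s"
  show ?thesis
  proof (cases "cs_map h0 w0 r s x = x")
    case True then show ?thesis using x by simp
  next
    case False
    then obtain m j where "Suc j < h m" "x \<in> lev m j" "cs_map h0 w0 r s x = x + dif m j"
      using map_cases[of x] by blast
    then show ?thesis using lev_next[of x m j] lev_sub[of "Suc j" m] by auto
  qed
qed

lemma preimage_countable:
  assumes "countable E"
  shows "countable {x. cs_map h0 w0 r s x \<in> E}"
proof -
  have "{x. cs_map h0 w0 r s x \<in> E} \<subseteq> E \<union> (\<Union>mj\<in>UNIV. (\<lambda>e. e - dif (fst mj) (snd mj)) ` E)"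
  proof
    fix x assume "x \<in> {x. cs_map h0 w0 r s x \<in> E}"
    then have xE: "cs_map h0 w0 r s x \<in> E" by simp
    show "x \<in> E \<union> (\<Union>mj\<in>UNIV. (\<lambda>e. e - dif (fst mj) (snd mj)) ` E)"
    proof (cases "cs_map h0 w0 r s x = x")
      case True then show ?thesis using xE by simp
    next
      case False
      then obtain m j where e: "cs_map h0 w0 r s x = x + dif m j" using map_cases[of x] by blast
      have "x = cs_map h0 w0 r s x - dif (fst (m,j)) (snd (m,j))" using e by simp
      then have "x \<in> (\<lambda>e. e - dif (fst (m,j)) (snd (m,j))) ` E" using xE by (rule image_eqI)
      then show ?thesis by blast
    qed
  qed
  moreover have "countable (E \<union> (\<Union>mj\<in>(UNIV::(nat\<times>nat) set). (\<lambda>e. e - dif (fst mj) (snd mj)) ` E))"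
    using assms by auto
  ultimately show ?thesis by (rule countable_subset)
qed

lemma h_pos: "h0 \<ge> 1 \<Longrightarrow> h m \<ge> 1"
proof (induction m)
  case 0 thus ?case by simp
next
  case (Suc m)
  have "h m \<le> h (Suc m)" unfolding length_ksl_Suc by simp
  then show ?case using Suc by simp
qed

lemma in_col: "x \<in> {0..<L m} \<Longrightarrow> \<exists>j<h m. x \<in> lev m j"
  using col_eq_interval[of m] by auto

end

locale setting =
  fixes r :: "nat \<Rightarrow> nat" and s :: "nat \<Rightarrow> nat \<Rightarrow> nat" and c :: nat and M :: nat
  assumes rpos: "\<forall>n\<ge>1. r n \<ge> 1"
    and reg: "\<forall>n>M. (\<forall>i<r n. s n i = c) \<and> s n (r n) = 0"
begin

sublocale A: csc "Suc 0" 1 r s by unfold_locales simp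

sublocale B: csc "A.h M + c" "A.w M" "\<lambda>n. r (M + n)" "\<lambda>n i. 0"
  by unfold_locales (rule A.w_pos)

lemma Bw: "B.w k = A.w (M + k)"
  by (induction k) auto

lemma sum_reg: "(\<Sum>i\<le>r (Suc (M + k)). s (Suc (M + k)) i) = r (Suc (M + k)) * c"
proof -
  have "(\<Sum>i\<le>r (Suc (M + k)). s (Suc (M + k)) i) = (\<Sum>i<r (Suc (M + k)). s (Suc (M + k)) i) + s (Suc (M + k)) (r (Suc (M + k)))"
    by (metis add.commute lessThan_Suc_atMost sum.lessThan_Suc)
  also have "\<dots> = r (Suc (M + k)) * c" using reg by simp
  finally show ?thesis .
qed

lemma Bh: "B.h k = A.h (M + k) + c"
proof (induction k)
  case 0 thus ?case by simp
next
  case (Suc k)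
  have "B.h (Suc k) = (r (M + Suc k) + 1) * B.h k" by (simp add: length_ksl_Suc)
  also have "\<dots> = (r (Suc (M + k)) + 1) * (A.h (M + k) + c)" using Suc by simp
  also have "\<dots> = A.h (Suc (M + k)) + c" by (simp add: length_ksl_Suc sum_reg algebra_simps)
  finally show ?case by simp
qed

lemma off_eq: "i \<le> r (Suc (M + k)) \<Longrightarrow> A.off (M + k) i = i * (A.h (M + k) + c)"
  unfolding A.off_def using reg by (simp add: algebra_simps)

lemma Boff_eq: "B.off k i = i * (A.h (M + k) + c)"
  unfolding B.off_def Bh by simp

definition Lt :: real where "Lt = real (A.h M + c) * A.w M"

lemma BL: "B.L k = Lt"
proof (induction k)
  case 0 thus ?case by (simp add: Lt_def)
next
  case (Suc k)
  have "B.L (Suc k) = real ((r (M + Suc k) + 1) * B.h k) * (B.w k / real (r (M + Suc k) + 1))"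
    by (simp add: length_ksl_Suc)
  also have "\<dots> = B.L k" by (simp add: field_simps)
  finally show ?case using Suc by simp
qed

lemma AL: "A.L (M + k) = Lt - real c * A.w (M + k)"
proof -
  have "real (A.h (M + k) + c) * A.w (M + k) = Lt" using BL[of k] by (simp only: Bh Bw)
  then have "real (A.h (M + k)) * A.w (M + k) + real c * A.w (M + k) = Lt" by (simp add: distrib_right)
  then show ?thesis by linarith
qed

lemma AL_le: "A.L m \<le> Lt"
proof (cases "m \<le> M")
  case True
  then have "A.L m \<le> A.L (M + 0)" using A.L_mono by simp
  also have "\<dots> \<le> Lt" unfolding AL using A.w_pos[of M] by simp
  finally show ?thesis .
next
  case False
  then obtain k where "m = M + k" by (metis le_Suc_ex nat_le_linear)
  then show ?thesis using AL[of k] A.w_pos[of "M+k"] by simp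
qed

lemma Aw_small: "\<epsilon> > 0 \<Longrightarrow> \<exists>n. \<forall>m\<ge>n. A.w m < \<epsilon>"
proof -
  assume e: "\<epsilon> > 0"
  obtain n where n: "(1/2::real)^n < \<epsilon>" using real_arch_pow_inv[OF e, of "1/2"] by auto
  have "A.w m < \<epsilon>" if "m \<ge> n" for m
  proof -
    have "A.w m \<le> (1/2)^m" using A.w_le[OF rpos, of m] by simp
    also have "\<dots> \<le> (1/2)^n" using that by (simp add: power_decreasing)
    finally show ?thesis using n by simp
  qed
  then show ?thesis by blast
qed

lemma Aspace: "cs_space (Suc 0) 1 r s = {0..<Lt}"
proof
  show "cs_space (Suc 0) 1 r s \<subseteq> {0..<Lt}"
  proof
    fix x assume "x \<in> cs_space (Suc 0) 1 r s"
    then obtain m where "x \<in> {0..<A.L m}" unfolding A.space_eq by blast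
    with AL_le[of m] show "x \<in> {0..<Lt}" by auto
  qed
  show "{0..<Lt} \<subseteq> cs_space (Suc 0) 1 r s"
  proof
    fix x assume x: "x \<in> {0..<Lt}"
    have "\<exists>k. x < A.L (M + k)"
    proof (cases "c = 0")
      case True
      then have "x < A.L (M + 0)" using AL[of 0] x by simp
      then show ?thesis by blast
    next
      case False
      then have "(Lt - x) / real c > 0" using x by simp
      then obtain n where n: "\<forall>m\<ge>n. A.w m < (Lt - x) / real c" using Aw_small by blast
      then have "A.w (M + n) < (Lt - x) / real c" by simp
      then have "real c * A.w (M + n) < Lt - x" using False by (simp add: field_simps)
      then have "x < A.L (M + n)" using AL[of n] by linarith
      then show ?thesis by blast
    qed
    then show "x \<in> cs_space (Suc 0) 1 r s" unfolding A.space_eq using x by auto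
  qed
qed

lemma Bspace: "cs_space (A.h M + c) (A.w M) (\<lambda>n. r (M + n)) (\<lambda>n i. 0) = {0..<Lt}"
  unfolding B.space_eq BL by simp

definition d :: "nat \<Rightarrow> nat \<Rightarrow> real" where
  "d k j = (real (B.ks k ! j) - real (A.ks (M + k) ! j)) * A.w (M + k)"

lemma d_step:
  assumes j: "j < A.h (M + k)" and x: "x \<in> A.lev (M + k) j"
  shows "\<exists>q<A.h (M + Suc k). x \<in> A.lev (M + Suc k) q \<and> d (Suc k) q = d k j"
proof -
  obtain i where i: "i \<le> r (Suc (M + k))" "x \<in> A.lev (Suc (M + k)) (A.off (M + k) i + j)"
    and nth: "\<forall>p<A.h (M + k). A.off (M + k) i + p < A.h (Suc (M + k)) \<and>
       A.ks (Suc (M + k)) ! (A.off (M + k) i + p) = A.ks (M + k) ! p * (r (Suc (M + k)) + 1) + i"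
    using A.refine[OF j x] by blast
  have jB: "j < B.h k" using j Bh by simp
  have "B.ks (Suc k) ! ((\<Sum>i'<i. B.h k + 0) + j) = B.ks k ! j * (r (M + Suc k) + 1) + i"
    using nth_ksl_Suc(1)[of i "\<lambda>n. r (M + n)" k j "A.h M + c" "\<lambda>n i. 0"] i jB by simp
  moreover have "(\<Sum>i'<i. B.h k + 0) = A.off (M + k) i"
    using off_eq[OF i(1)] Boff_eq[of k i] unfolding B.off_def by simp
  ultimately have eB: "B.ks (Suc k) ! (A.off (M + k) i + j) = B.ks k ! j * (r (Suc (M + k)) + 1) + i"
    by simp
  have eA: "A.ks (Suc (M + k)) ! (A.off (M + k) i + j) = A.ks (M + k) ! j * (r (Suc (M + k)) + 1) + i"
    and q: "A.off (M + k) i + j < A.h (Suc (M + k))" using nth j by auto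
  have R: "real (r (Suc (M + k)) + 1) > 0" by simp
  have "d (Suc k) (A.off (M + k) i + j) = d k j"
    unfolding d_def using eA eB R by (simp add: field_simps)
  then show ?thesis using q i(2) by (intro exI[of _ "A.off (M + k) i + j"]) simp
qed

lemma d_prop:
  assumes "k \<le> k'" "j < A.h (M + k)" "x \<in> A.lev (M + k) j"
  shows "\<exists>q<A.h (M + k'). x \<in> A.lev (M + k') q \<and> d k' q = d k j"
  using assms(1)
proof (induction k' rule: dec_induct)
  case base thus ?case using assms by blast
next
  case (step n)
  then obtain q where "q < A.h (M + n)" "x \<in> A.lev (M + n) q" "d n q = d k j" by blast
  then show ?case using d_step by metis
qed

lemma d_unique_le:
  assumes "k \<le> k'" "j < A.h (M + k)" "x \<in> A.lev (M + k) j" "j' < A.h (M + k')" "x \<in> A.lev (M + k') j'"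
  shows "d k j = d k' j'"
proof -
  obtain q where q: "q < A.h (M + k')" "x \<in> A.lev (M + k') q" "d k' q = d k j"
    using d_prop[OF assms(1-3)] by blast
  have "q = j'" using A.lev_unique[OF q(1) assms(4) q(2) assms(5)] .
  then show ?thesis using q by simp
qed

lemma d_unique:
  assumes "j < A.h (M + k)" "x \<in> A.lev (M + k) j" "j' < A.h (M + k')" "x \<in> A.lev (M + k') j'"
  shows "d k j = d k' j'"
  using d_unique_le[of k k' j x j'] d_unique_le[of k' k j' x j] assms nat_le_linear by metis

definition Pp :: "nat \<times> nat \<Rightarrow> real \<Rightarrow> bool" where
  "Pp kj x = (snd kj < A.h (M + fst kj) \<and> x \<in> A.lev (M + fst kj) (snd kj))"

definition phi :: "real \<Rightarrow> real" where
  "phi x = (if \<exists>kj. Pp kj x then x + (case (SOME kj. Pp kj x) of (k, j) \<Rightarrow> d k j) else x)"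

lemma phi_eq:
  assumes "j < A.h (M + k)" "x \<in> A.lev (M + k) j"
  shows "phi x = x + d k j"
proof -
  have "Pp (k, j) x" unfolding Pp_def using assms by simp
  then have ex: "\<exists>kj. Pp kj x" by blast
  define kj0 where "kj0 = (SOME kj. Pp kj x)"
  have P0: "Pp kj0 x" unfolding kj0_def using ex by (rule someI_ex)
  then have a: "snd kj0 < A.h (M + fst kj0)" "x \<in> A.lev (M + fst kj0) (snd kj0)" unfolding Pp_def by auto
  have dd: "d (fst kj0) (snd kj0) = d k j" by (rule d_unique[OF a assms])
  have "phi x = x + (case kj0 of (k, j) \<Rightarrow> d k j)" unfolding phi_def if_P[OF ex] kj0_def ..
  also have "\<dots> = x + d (fst kj0) (snd kj0)" by (simp add: case_prod_beta)
  finally show ?thesis using dd by simp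
qed

lemma phi_lev:
  assumes "j < A.h (M + k)" "x \<in> A.lev (M + k) j"
  shows "phi x \<in> B.lev k j" "j < B.h k"
proof -
  show "j < B.h k" using assms Bh by simp
  have a: "real (A.ks (M+k) ! j) * A.w (M+k) \<le> x" "x < real (A.ks (M+k) ! j) * A.w (M+k) + A.w (M+k)"
    using assms(2) unfolding A.lev_def by auto
  have b: "phi x - real (B.ks k ! j) * A.w (M+k) = x - real (A.ks (M+k) ! j) * A.w (M+k)"
    unfolding phi_eq[OF assms] d_def by (simp add: algebra_simps)
  have "real (B.ks k ! j) * A.w (M+k) \<le> phi x" "phi x < real (B.ks k ! j) * A.w (M+k) + A.w (M+k)"
    using a b by linarith+
  then show "phi x \<in> B.lev k j" unfolding B.lev_def Bw by simp
qed

lemma eventually_col: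
  assumes "x \<in> cs_space (Suc 0) 1 r s"
  shows "\<exists>k0. \<forall>k\<ge>k0. \<exists>j<A.h (M + k). x \<in> A.lev (M + k) j"
proof -
  obtain m where m: "x \<in> {0..<A.L m}" using assms unfolding A.space_eq by blast
  have "\<exists>j<A.h (M + k). x \<in> A.lev (M + k) j" if "k \<ge> m" for k
  proof -
    have "A.L m \<le> A.L (M + k)" using that by (intro A.L_mono) simp
    then have "x \<in> {0..<A.L (M + k)}" using m by auto
    then show ?thesis by (rule A.in_col)
  qed
  then show ?thesis by blast
qed

lemma phi_inj: "inj_on phi (cs_space (Suc 0) 1 r s)"
proof (rule inj_onI)
  fix x y assume x: "x \<in> cs_space (Suc 0) 1 r s" and y: "y \<in> cs_space (Suc 0) 1 r s" and e: "phi x = phi y"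
  obtain k1 where k1: "\<forall>k\<ge>k1. \<exists>j<A.h (M + k). x \<in> A.lev (M + k) j" using eventually_col[OF x] by blast
  obtain k2 where k2: "\<forall>k\<ge>k2. \<exists>j<A.h (M + k). y \<in> A.lev (M + k) j" using eventually_col[OF y] by blast
  obtain j where j: "j < A.h (M + max k1 k2)" "x \<in> A.lev (M + max k1 k2) j" using k1[rule_format, OF max.cobounded1] by blast
  obtain j' where j': "j' < A.h (M + max k1 k2)" "y \<in> A.lev (M + max k1 k2) j'" using k2[rule_format, OF max.cobounded2] by blast
  have "phi x \<in> B.lev (max k1 k2) j" "j < B.h (max k1 k2)" using phi_lev[OF j] by auto
  moreover have "phi y \<in> B.lev (max k1 k2) j'" "j' < B.h (max k1 k2)" using phi_lev[OF j'] by auto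
  ultimately have "j = j'" using B.lev_unique e by metis
  then show "x = y" using e phi_eq[OF j] phi_eq[OF j'] by simp
qed

definition G :: "real set" where
  "G = {x. \<exists>m j. Suc j < A.h m \<and> x \<in> A.lev m j}"

lemma commute:
  assumes "x \<in> G"
  shows "phi (cs_map (Suc 0) 1 r s x) = cs_map (A.h M + c) (A.w M) (\<lambda>n. r (M + n)) (\<lambda>n i. 0) (phi x)"
proof -
  obtain m j where mj: "Suc j < A.h m" "x \<in> A.lev m j" using assms by (auto simp: G_def)
  obtain j' where j': "Suc j' < A.h (M + m)" "x \<in> A.lev (M + m) j'"
    using A.propagate[OF mj, of "M + m"] by auto
  have T: "cs_map (Suc 0) 1 r s x = x + A.dif (M + m) j'" by (rule A.cs_map_eq[OF j'])
  have Tl: "x + A.dif (M + m) j' \<in> A.lev (M + m) (Suc j')" by (rule A.lev_next[OF j'(2)])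
  have p1: "phi x = x + d m j'" using phi_eq[of j' m x] j' by simp
  have p1l: "phi x \<in> B.lev m j'" using phi_lev[of j' m x] j' by simp
  have p2: "phi (x + A.dif (M + m) j') = x + A.dif (M + m) j' + d m (Suc j')"
    using phi_eq[OF j'(1) Tl] .
  have jB: "Suc j' < B.h m" using j' Bh by simp
  have S: "cs_map (A.h M + c) (A.w M) (\<lambda>n. r (M + n)) (\<lambda>n i. 0) (phi x) = phi x + B.dif m j'"
    by (rule B.cs_map_eq[OF jB p1l])
  show ?thesis unfolding T p2 S unfolding p1 A.dif_def B.dif_def d_def Bw
    by (simp add: algebra_simps)
qed

abbreviation Sp where "Sp \<equiv> cs_space (Suc 0) 1 r s"
abbreviation T where "T \<equiv> cs_map (Suc 0) 1 r s"

lemma top_unique: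
  assumes x: "x \<in> Sp - G" and y: "y \<in> Sp - G"
  shows "x = y"
proof (rule ccontr)
  assume ne: "x \<noteq> y"
  obtain m1 where m1: "x \<in> {0..<A.L m1}" using x unfolding A.space_eq by blast
  obtain m2 where m2: "y \<in> {0..<A.L m2}" using y unfolding A.space_eq by blast
  obtain n where n: "\<forall>m\<ge>n. A.w m < \<bar>x - y\<bar>" using Aw_small[of "\<bar>x - y\<bar>"] ne by auto
  define m where "m = max (max m1 m2) n"
  have "m1 \<le> m" "m2 \<le> m" unfolding m_def by auto
  then have "A.L m1 \<le> A.L m" "A.L m2 \<le> A.L m" by (auto intro: A.L_mono)
  then have "x \<in> {0..<A.L m}" "y \<in> {0..<A.L m}" using m1 m2 by auto
  then obtain j j' where j: "j < A.h m" "x \<in> A.lev m j" and j': "j' < A.h m" "y \<in> A.lev m j'"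
    using A.in_col by blast
  have "\<not> Suc j < A.h m" using x j unfolding G_def by blast
  moreover have "\<not> Suc j' < A.h m" using y j' unfolding G_def by blast
  ultimately have "j = j'" using j j' by simp
  then have "\<bar>x - y\<bar> < A.w m" using j j' unfolding A.lev_def by auto
  moreover have "A.w m < \<bar>x - y\<bar>" using n unfolding m_def by simp
  ultimately show False by simp
qed

lemma top_countable: "countable (Sp - G)"
proof (cases "Sp - G = {}")
  case True thus ?thesis by (metis countable_empty)
next
  case False
  then obtain a where "a \<in> Sp - G" by blast
  then have "Sp - G \<subseteq> {a}" using top_unique by blast
  then show ?thesis by (rule countable_subset) simp
qed

definition X0 :: "real set" where "X0 = {x \<in> Sp. \<forall>n. (T ^^ n) x \<in> G}"

lemma T_Sp: "x \<in> Sp \<Longrightarrow> (T ^^ n) x \<in> Sp"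
  by (induction n) (auto intro: A.map_space)

lemma bad_countable: "countable (Sp - X0)"
proof -
  define E where "E n = {x \<in> Sp. (T ^^ n) x \<in> Sp - G}" for n
  have "countable (E n)" for n
  proof (induction n)
    case 0
    have "E 0 = Sp - G" unfolding E_def by auto
    then show ?case using top_countable by simp
  next
    case (Suc n)
    have "E (Suc n) \<subseteq> {x. T x \<in> E n}"
    proof
      fix x assume "x \<in> E (Suc n)"
      then have x: "x \<in> Sp" "(T ^^ Suc n) x \<in> Sp - G" unfolding E_def by auto
      have "(T ^^ Suc n) x = (T ^^ n) (T x)" by (simp only: funpow_Suc_right comp_apply)
      then show "x \<in> {x. T x \<in> E n}" using x A.map_space[of x] unfolding E_def by simp
    qed
    moreover have "countable {x. T x \<in> E n}" using Suc by (rule A.preimage_countable)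
    ultimately show ?case by (rule countable_subset)
  qed
  moreover have "Sp - X0 \<subseteq> (\<Union>n. E n)" unfolding X0_def E_def using T_Sp by blast
  moreover have "countable (\<Union>n. E n)" using calculation(1) by (intro countable_UN) auto
  ultimately show ?thesis by (meson countable_subset)
qed

lemma X0_sub: "X0 \<subseteq> Sp" unfolding X0_def by blast

lemma X0_G: "X0 \<subseteq> G" unfolding X0_def by (auto dest: spec[of _ 0])

lemma T_X0: "T ` X0 \<subseteq> X0"
proof
  fix y assume "y \<in> T ` X0"
  then obtain x where x: "x \<in> X0" "y = T x" by blast
  have "(T ^^ n) (T x) \<in> G" for n
  proof -
    have "(T ^^ Suc n) x \<in> G" using x unfolding X0_def by blast
    then show ?thesis by (simp only: funpow_Suc_right comp_apply)
  qed
  moreover have "T x \<in> Sp" using x X0_sub A.map_space by blast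
  ultimately show "y \<in> X0" using x unfolding X0_def by blast
qed

definition Lp :: "nat \<Rightarrow> real" where "Lp k = (if k = 0 then 0 else A.L (M + (k - 1)))"

definition P :: "nat \<times> nat \<Rightarrow> real set" where
  "P kj = (if snd kj < A.h (M + fst kj) then A.lev (M + fst kj) (snd kj) \<inter> {Lp (fst kj)..} else {})"

lemma P_borel: "P i \<in> sets borel"
  unfolding P_def A.lev_def by auto

lemma P_sub: "P i \<subseteq> Sp"
  unfolding P_def using A.lev_sub by auto

lemma P_phi: "x \<in> P (k, j) \<Longrightarrow> phi x = x + d k j"
  unfolding P_def by (auto intro: phi_eq split: if_splits)

lemma lev_below: "j < A.h m \<Longrightarrow> A.lev m j \<subseteq> {0..<A.L m}"
  using A.col_eq_interval[of m] by blast

lemma P_cover: "Sp \<subseteq> (\<Union>i. P i)"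
proof
  fix x assume x: "x \<in> Sp"
  obtain m where m: "x \<in> {0..<A.L m}" using x unfolding A.space_eq by blast
  have "A.L m \<le> A.L (M + m)" by (intro A.L_mono) simp
  then have ex: "\<exists>k. x < A.L (M + k)" using m by (intro exI[of _ m]) auto
  define k where "k = (LEAST k. x < A.L (M + k))"
  have k: "x < A.L (M + k)" unfolding k_def using ex by (rule LeastI_ex)
  have x0: "0 \<le> x" using m by simp
  obtain j where j: "j < A.h (M + k)" "x \<in> A.lev (M + k) j" using A.in_col[of x "M + k"] k x0 by auto
  have "Lp k \<le> x"
  proof (cases "k = 0")
    case True thus ?thesis using x0 by (simp add: Lp_def)
  next
    case False
    then have "k - 1 < k" by simp
    then have "\<not> x < A.L (M + (k - 1))" unfolding k_def by (rule not_less_Least)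
    then show ?thesis using False by (simp add: Lp_def)
  qed
  then have "x \<in> P (k, j)" using j unfolding P_def by simp
  then show "x \<in> (\<Union>i. P i)" by blast
qed

lemma P_disj: "disjoint_family P"
  unfolding disjoint_family_on_def
proof (intro ballI impI)
  fix a b :: "nat \<times> nat" assume ne: "a \<noteq> b"
  obtain k j k' j' where ab: "a = (k, j)" "b = (k', j')" by (cases a, cases b) auto
  have main: "P (k, j) \<inter> P (k', j') = {}" if "(k, j) \<noteq> (k', j')" "k \<le> k'" for k j k' j'
  proof (cases "k = k'")
    case True
    then have "j \<noteq> j'" using that by simp
    then show ?thesis unfolding P_def using True A.lev_unique by auto
  next
    case False
    then have kk: "k \<le> k' - 1" "k' \<noteq> 0" using that by auto
    have "A.L (M + k) \<le> A.L (M + (k' - 1))" using kk by (intro A.L_mono) simp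
    moreover have "P (k, j) \<subseteq> {..<A.L (M + k)}"
    proof
      fix x assume "x \<in> P (k, j)"
      then have "j < A.h (M + k)" "x \<in> A.lev (M + k) j" unfolding P_def by (auto split: if_splits)
      then have "x \<in> {0..<A.L (M + k)}" using lev_below by blast
      then show "x \<in> {..<A.L (M + k)}" by simp
    qed
    moreover have "P (k', j') \<subseteq> {A.L (M + (k' - 1))..}" unfolding P_def Lp_def using kk by auto
    ultimately show ?thesis by fastforce
  qed
  show "P a \<inter> P b = {}"
  proof (cases "k \<le> k'")
    case True thus ?thesis using main[of k j k' j'] ne ab by simp
  next
    case False thus ?thesis using main[of k' j' k j] ne ab by (simp add: Int_commute)
  qed
qed

lemma Sp_eq: "Sp = {0..<Lt}" by (rule Aspace)

lemma X0_borel: "X0 \<in> sets borel"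
proof -
  have "X0 = Sp - (Sp - X0)" using X0_sub by blast
  moreover have "Sp - X0 \<in> sets borel" by (intro sets.countable[OF _ bad_countable]) simp
  ultimately show ?thesis unfolding Sp_eq by (metis sets.Diff atLeastLessThan_borel)
qed

definition Q :: "nat \<times> nat \<Rightarrow> real set" where "Q i = X0 \<inter> P i"

lemma Q_borel: "Q i \<in> sets borel" unfolding Q_def using X0_borel P_borel by auto

lemma Q_disj: "disjoint_family Q" using P_disj unfolding Q_def disjoint_family_on_def by blast

definition dQ :: "nat \<times> nat \<Rightarrow> real" where "dQ i = d (fst i) (snd i)"


lemma Q_union: "(\<Union>i. Q i) = X0" unfolding Q_def using P_cover X0_sub by blast

lemma Q_phi: "x \<in> Q i \<Longrightarrow> phi x = x + dQ i"
  unfolding Q_def dQ_def using P_phi[of x "fst i" "snd i"] by simp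

lemma phi_inj_X0: "inj_on phi X0" using phi_inj X0_sub by (rule inj_on_subset)

lemma meas_pres:
  assumes "A \<in> sets borel"
  shows "emeasure lborel (phi -` A \<inter> X0) = emeasure lborel (A \<inter> phi ` X0)"
  using piecewise_translation(1)[where Q=Q and dd=dQ and f=phi and A=A, OF Q_borel Q_disj Q_phi]
    phi_inj_X0 assms unfolding Q_union by blast

lemma Y0_borel: "phi ` X0 \<in> sets borel"
  using piecewise_translation(2)[where Q=Q and dd=dQ and f=phi and A=UNIV, OF Q_borel Q_disj Q_phi]
    phi_inj_X0 unfolding Q_union by simp

lemma phi_meas: "phi \<in> borel_measurable (restrict_space lborel X0)"
  by (rule piecewise_meas[where Q=Q and dd=dQ, OF Q_borel _ _ Q_phi]) (auto simp: Q_union[symmetric])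

lemma inv_meas: "the_inv_into X0 phi \<in> borel_measurable (restrict_space lborel (phi ` X0))"
proof (rule piecewise_meas[where Q="\<lambda>i. phi ` Q i" and dd="\<lambda>i. - dQ i"])
  fix i
  have "phi ` Q i = (\<lambda>x. x + dQ i) ` Q i" using Q_phi by (auto simp: image_iff)
  then show "phi ` Q i \<in> sets borel" using trans_sets[OF Q_borel] by simp
  show "phi ` Q i \<subseteq> phi ` X0" using Q_union by blast
next
  show "phi ` X0 \<subseteq> (\<Union>i. phi ` Q i)" using Q_union by blast
next
  fix i y assume "y \<in> phi ` Q i"
  then obtain x where x: "x \<in> Q i" "y = phi x" by blast
  have "x \<in> X0" using x Q_union by blast
  then have "the_inv_into X0 phi y = x" using x phi_inj_X0 by (simp add: the_inv_into_f_f)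
  then show "the_inv_into X0 phi y = y + - dQ i" using x Q_phi by simp
qed

abbreviation Mr where "Mr \<equiv> restrict_space lborel {0..<Lt}"

lemma phi_range: "phi ` X0 \<subseteq> {0..<Lt}"
proof
  fix y assume "y \<in> phi ` X0"
  then obtain x where x: "x \<in> X0" "y = phi x" by blast
  then have "x \<in> Sp" using X0_sub by blast
  then obtain k0 where "\<forall>k\<ge>k0. \<exists>j<A.h (M + k). x \<in> A.lev (M + k) j" using eventually_col by blast
  then obtain j where j: "j < A.h (M + k0)" "x \<in> A.lev (M + k0) j" by blast
  have "phi x \<in> B.lev k0 j" "j < B.h k0" using phi_lev[OF j] by auto
  then have "phi x \<in> cs_space (A.h M + c) (A.w M) (\<lambda>n. r (M + n)) (\<lambda>n i. 0)" using B.lev_sub by blast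
  then show "y \<in> {0..<Lt}" using x Bspace by simp
qed

lemma main: "is_odometer (cs_measure (Suc 0) 1 r s) (cs_map (Suc 0) 1 r s)"
proof -
  define Y0 where "Y0 = phi ` X0"
  let ?S = "cs_map (A.h M + c) (A.w M) (\<lambda>n. r (M + n)) (\<lambda>n i. 0)"
  have I: "{0..<Lt} \<in> sets lborel" by simp
  have Meq: "cs_measure (Suc 0) 1 r s = Mr" unfolding cs_measure_def Aspace ..
  have Neq: "cs_measure (A.h M + c) (A.w M) (\<lambda>n. r (M + n)) (\<lambda>n i. 0) = Mr"
    unfolding cs_measure_def Bspace ..
  have spMr: "space Mr = {0..<Lt}" using I by simp
  have setsMr: "B \<in> sets Mr \<longleftrightarrow> B \<subseteq> {0..<Lt} \<and> B \<in> sets borel" for B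
    using sets_restrict_space_iff[of "{0..<Lt}" lborel B] I by simp
  have emMr: "emeasure Mr B = emeasure lborel B" if "B \<subseteq> {0..<Lt}" for B
    using emeasure_restrict_space[of "{0..<Lt}" lborel B] I that by simp
  have X0sub: "X0 \<subseteq> {0..<Lt}" using X0_sub Sp_eq by simp
  have Y0sub: "Y0 \<subseteq> {0..<Lt}" using phi_range unfolding Y0_def .
  have Y0b: "Y0 \<in> sets borel" using Y0_borel unfolding Y0_def .
  have rX: "restrict_space Mr X0 = restrict_space lborel X0"
    using restrict_restrict_space[of "{0..<Lt}" lborel X0] I X0_borel X0sub
    by (simp add: Int_absorb1)
  have rY: "restrict_space Mr Y0 = restrict_space lborel Y0"
    using restrict_restrict_space[of "{0..<Lt}" lborel Y0] I Y0b Y0sub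
    by (simp add: Int_absorb1)
  have null1: "emeasure Mr (space Mr - X0) = 0"
  proof -
    have "emeasure Mr (space Mr - X0) = emeasure lborel (Sp - X0)" using emMr spMr Sp_eq by simp
    also have "\<dots> = 0" using bad_countable by (rule emeasure_lborel_countable)
    finally show ?thesis .
  qed
  have null2: "emeasure Mr (space Mr - Y0) = 0"
  proof -
    have "emeasure lborel Y0 = emeasure lborel (phi -` Y0 \<inter> X0)"
      using meas_pres[OF Y0b] unfolding Y0_def by simp
    also have "phi -` Y0 \<inter> X0 = X0" unfolding Y0_def by auto
    also have "X0 = Sp - (Sp - X0)" using X0_sub by blast
    also have "emeasure lborel (Sp - (Sp - X0)) = emeasure lborel Sp"
      by (rule emeasure_Diff_null_set) (use bad_countable countable_imp_null_set_lborel Sp_eq in auto)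
    finally have eY: "emeasure lborel Y0 = emeasure lborel {0..<Lt}" using Sp_eq by simp
    have "emeasure Mr (space Mr - Y0) = emeasure lborel ({0..<Lt} - Y0)" using emMr spMr by simp
    also have "\<dots> = emeasure lborel {0..<Lt} - emeasure lborel Y0"
    proof (rule emeasure_Diff)
      have "Lt \<ge> 0" unfolding Lt_def using A.w_pos[of M] by simp
      then have "emeasure lborel {0..<Lt} \<noteq> \<infinity>" by simp
      then show "emeasure lborel Y0 \<noteq> \<infinity>" using eY by simp
    qed (use Y0b Y0sub in auto)
    also have "\<dots> = 0"
    proof -
      have "Lt \<ge> 0" unfolding Lt_def using A.w_pos[of M] by simp
      then show ?thesis using eY by (simp add: ennreal_minus)
    qed
    finally show ?thesis .
  qed
  have TX: "cs_map (Suc 0) 1 r s ` X0 \<subseteq> X0" by (rule T_X0)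
  have com: "\<forall>x\<in>X0. phi (cs_map (Suc 0) 1 r s x) = ?S (phi x)"
    using commute X0_G by blast
  have SY: "?S ` Y0 \<subseteq> Y0"
  proof
    fix y assume "y \<in> ?S ` Y0"
    then obtain x where x: "x \<in> X0" "y = ?S (phi x)" unfolding Y0_def by blast
    then have "y = phi (cs_map (Suc 0) 1 r s x)" using com by simp
    moreover have "cs_map (Suc 0) 1 r s x \<in> X0" using TX x by blast
    ultimately show "y \<in> Y0" unfolding Y0_def by blast
  qed
  have bij: "bij_betw phi X0 Y0" unfolding Y0_def using phi_inj_X0 by (rule inj_on_imp_bij_betw)
  have m1: "phi \<in> measurable (restrict_space Mr X0) (restrict_space Mr Y0)"
    unfolding rX rY
  proof (rule measurable_restrict_space2)
    show "phi \<in> space (restrict_space lborel X0) \<rightarrow> Y0" unfolding Y0_def by (auto simp: space_restrict_space)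
    show "phi \<in> measurable (restrict_space lborel X0) lborel" using phi_meas by simp
  qed
  have m2: "the_inv_into X0 phi \<in> measurable (restrict_space Mr Y0) (restrict_space Mr X0)"
    unfolding rX rY
  proof (rule measurable_restrict_space2)
    show "the_inv_into X0 phi \<in> space (restrict_space lborel Y0) \<rightarrow> X0"
      unfolding Y0_def using the_inv_into_into[OF phi_inj_X0] by (auto simp: space_restrict_space)
    show "the_inv_into X0 phi \<in> measurable (restrict_space lborel Y0) lborel"
      using inv_meas unfolding Y0_def by simp
  qed
  have mp: "\<forall>B\<in>sets Mr. B \<subseteq> Y0 \<longrightarrow> emeasure Mr (phi -` B \<inter> X0) = emeasure Mr B"
  proof (intro ballI impI)
    fix B assume B: "B \<in> sets Mr" "B \<subseteq> Y0"
    then have Bb: "B \<in> sets borel" using setsMr by blast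
    have "phi -` B \<inter> X0 \<subseteq> {0..<Lt}" using X0sub by blast
    then have "emeasure Mr (phi -` B \<inter> X0) = emeasure lborel (phi -` B \<inter> X0)" by (rule emMr)
    also have "\<dots> = emeasure lborel (B \<inter> Y0)" using meas_pres[OF Bb] unfolding Y0_def .
    also have "B \<inter> Y0 = B" using B by blast
    also have "emeasure lborel B = emeasure Mr B" using emMr B Y0sub by auto
    finally show "emeasure Mr (phi -` B \<inter> X0) = emeasure Mr B" .
  qed
  have iso: "mp_isomorphic Mr (cs_map (Suc 0) 1 r s) Mr ?S"
    unfolding mp_isomorphic_def
    apply (rule exI[of _ X0], rule exI[of _ Y0], rule exI[of _ phi])
    using X0_borel X0sub Y0b Y0sub setsMr null1 null2 TX SY bij m1 m2 mp com by blast
  have hpos: "A.h M + c \<ge> 1" using A.h_pos[of M] by simp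
  show ?thesis
    unfolding is_odometer_def Meq
    apply (rule exI[of _ "A.h M + c"], rule exI[of _ "A.w M"], rule exI[of _ "\<lambda>n. r (M + n)"],
           rule exI[of _ "\<lambda>n i. 0"], rule exI[of _ 0])
    unfolding Neq using hpos A.w_pos[of M] rpos iso by auto
qed

end

theorem proposition2:
  fixes r :: "nat \<Rightarrow> nat" and s :: "nat \<Rightarrow> nat \<Rightarrow> nat" and c :: nat
  assumes "\<forall>n\<ge>1. r n \<ge> 1"
    and "\<exists>N. \<forall>n\<ge>N. (\<forall>i<r n. s n i = c) \<and> s n (r n) = 0"
  shows "is_odometer (rank_one_measure r s) (rank_one_map r s)"
proof -
  obtain N where N: "\<forall>n\<ge>N. (\<forall>i<r n. s n i = c) \<and> s n (r n) = 0" using assms(2) by blast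
  interpret setting r s c N
    by unfold_locales (use assms(1) N in auto)
  have "is_odometer (cs_measure (Suc 0) 1 r s) (cs_map (Suc 0) 1 r s)" by (rule main)
  then show ?thesis unfolding rank_one_measure_def rank_one_map_def by simp
qed

end
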